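(* Let $(S,|\cdot|)$ be a finite metric space with $n$ points, let $t\ge1$ be a real number, and let $G'=(S,E')$ be a $t$-spanner for $S$ with $m$ edges. Then for any integer $f$ with $1\le f\le (n-1)/2$, the graph $G=(S,E)$ obtained from $G'$ by the construction in the context is an $f$-faulty-degree $((8f+2)t)$-spanner for $S$ that has at most $(4f-1)m$ edges.
   Context: For a finite metric space $(S,|\cdot|)$, $K_S$ denotes the complete graph on $S$ in which each edge $\{p,q\}$ has weight $|pq|$. All graphs on vertex set $S$ considered have edge weights $|pq|$. For an edge-weighted graph $X$ and vertices $p,q$, $\delta_X(p,q)$ is the length of a shortest path between $p$ and $q$ in $X$ ($+\infty$ if none exists). For a set $F$ of edges, $X\setminus F$ is the graph with the same vertex set as $X$ and edge set $E_X\setminus F$. A graph $G'=(S,E')$ is a $t$-spanner for $S$ if $\delta_{G'}(p,q)\le t|pq|$ for all $p,q\in S$. For an integer $f\ge 0$ and real $t\ge1$, a graph $G=(S,E)$ is an $f$-faulty-degree $t$-spanner for $S$ if for every subset $F\subseteq E$ such that the graph $(S,F)$ has maximum degree at most $f$, and for all $p,q\in S$, $\delta_{G\setminus F}(p,q)\le t\cdot\delta_{K_S\setminus F}(p,q)$. Construction: Let $G'=(S,E')$ be a $t$-spanner for $S$, $n=|S|$, and let $f$ be an integer with $1\le f\le (n-1)/2$. For each edge $\{a,b\}\in E'$, list the points of $S\setminus\{a,b\}$ as $c_1,\dots,c_{n-2}$ in non-decreasing order of $|ac_i|+|c_ib|$ (ties broken arbitrarily) and let $C_{ab}=\{c_1,\dots,c_{2f-1}\}$.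 The graph $G=(S,E)$ has edge set $E=E'\cup\{\{a,c\},\{c,b\}:\{a,b\}\in E',\ c\in C_{ab}\}$. *)

theory Defs
  imports "HOL-Library.Extended_Real"
begin

definition finite_metric_space :: "'a set \<Rightarrow> ('a \<Rightarrow> 'a \<Rightarrow> real) \<Rightarrow> bool" where
  "finite_metric_space S d \<longleftrightarrow> finite S \<and>
     (\<forall>p\<in>S. \<forall>q\<in>S. d p q \<ge> 0 \<and> (d p q = 0 \<longleftrightarrow> p = q) \<and> d p q = d q p) \<and>
     (\<forall>p\<in>S. \<forall>q\<in>S. \<forall>r\<in>S. d p r \<le> d p q + d q r)"

text \<open>Graphs on S are given by edge sets: sets of 2-element subsets {p,q} of S.
  Edge {p,q} has weight d p q.\<close>
definition graph_on :: "'a set \<Rightarrow> 'a set set \<Rightarrow> bool" where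
  "graph_on S E \<longleftrightarrow> E \<subseteq> {{p, q} | p q. p \<in> S \<and> q \<in> S \<and> p \<noteq> q}"

definition complete_edges :: "'a set \<Rightarrow> 'a set set" where
  "complete_edges S = {{p, q} | p q. p \<in> S \<and> q \<in> S \<and> p \<noteq> q}"

definition is_path :: "'a set set \<Rightarrow> 'a \<Rightarrow> 'a \<Rightarrow> 'a list \<Rightarrow> bool" where
  "is_path E p q w \<longleftrightarrow> w \<noteq> [] \<and> hd w = p \<and> last w = q \<and>
     (\<forall>i. Suc i < length w \<longrightarrow> {w ! i, w ! Suc i} \<in> E)"

definition path_length :: "('a \<Rightarrow> 'a \<Rightarrow> real) \<Rightarrow> 'a list \<Rightarrow> real" where
  "path_length d w = (\<Sum>i<length w - 1. d (w ! i) (w ! Suc i))"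

text \<open>Shortest path distance delta_X(p,q); +infinity if no path exists.\<close>
definition sp_dist :: "('a \<Rightarrow> 'a \<Rightarrow> real) \<Rightarrow> 'a set set \<Rightarrow> 'a \<Rightarrow> 'a \<Rightarrow> ereal" where
  "sp_dist d E p q = (INF w \<in> {w. is_path E p q w}. ereal (path_length d w))"

definition is_t_spanner :: "'a set \<Rightarrow> ('a \<Rightarrow> 'a \<Rightarrow> real) \<Rightarrow> real \<Rightarrow> 'a set set \<Rightarrow> bool" where
  "is_t_spanner S d t E \<longleftrightarrow> graph_on S E \<and>
     (\<forall>p\<in>S. \<forall>q\<in>S. sp_dist d E p q \<le> ereal (t * d p q))"

definition degree :: "'a set set \<Rightarrow> 'a \<Rightarrow> nat" where
  "degree F v = card {e \<in> F. v \<in> e}"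

definition fault_degree_spanner ::
  "'a set \<Rightarrow> ('a \<Rightarrow> 'a \<Rightarrow> real) \<Rightarrow> nat \<Rightarrow> real \<Rightarrow> 'a set set \<Rightarrow> bool" where
  "fault_degree_spanner S d f t E \<longleftrightarrow> graph_on S E \<and>
     (\<forall>F. F \<subseteq> E \<and> (\<forall>v\<in>S. degree F v \<le> f) \<longrightarrow>
        (\<forall>p\<in>S. \<forall>q\<in>S. sp_dist d (E - F) p q \<le> ereal t * sp_dist d (complete_edges S - F) p q))"

definition valid_C ::
  "'a set \<Rightarrow> ('a \<Rightarrow> 'a \<Rightarrow> real) \<Rightarrow> nat \<Rightarrow> 'a set set \<Rightarrow> ('a set \<Rightarrow> 'a set) \<Rightarrow> bool" where
  "valid_C S d f E' C \<longleftrightarrow>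
     (\<forall>a b. {a, b} \<in> E' \<longrightarrow>
        (\<exists>cs. distinct cs \<and> set cs = S - {a, b} \<and>
              sorted_wrt (\<lambda>x y. d a x + d x b \<le> d a y + d y b) cs \<and>
              C {a, b} = set (take (2 * f - 1) cs)))"

definition construction :: "'a set set \<Rightarrow> ('a set \<Rightarrow> 'a set) \<Rightarrow> 'a set set" where
  "construction E' C = E' \<union> {e. \<exists>a b c. {a, b} \<in> E' \<and> c \<in> C {a, b} \<and> (e = {a, c} \<or> e = {c, b})}"

end

theory Submission
  imports Defs
begin

fun walk :: "'a set set \<Rightarrow> 'a list \<Rightarrow> bool" where
  "walk E [] = False"
| "walk E [x] = True"
| "walk E (x # y # xs) = ({x, y} \<in> E \<and> walk E (y # xs))"

fun wlen :: "('a \<Rightarrow> 'a \<Rightarrow> real) \<Rightarrow> 'a list \<Rightarrow> real" where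
  "wlen d [] = 0"
| "wlen d [x] = 0"
| "wlen d (x # y # xs) = d x y + wlen d (y # xs)"

lemma walk_idx: "walk E w \<longleftrightarrow> w \<noteq> [] \<and> (\<forall>i. Suc i < length w \<longrightarrow> {w ! i, w ! Suc i} \<in> E)"
proof (induction E w rule: walk.induct)
  case (3 E x y xs)
  show ?case
  proof
    assume "walk E (x # y # xs)"
    then show "x # y # xs \<noteq> [] \<and> (\<forall>i. Suc i < length (x # y # xs) \<longrightarrow> {(x # y # xs) ! i, (x # y # xs) ! Suc i} \<in> E)"
      using 3 by (auto simp: less_Suc_eq_0_disj)
  next
    assume A: "x # y # xs \<noteq> [] \<and> (\<forall>i. Suc i < length (x # y # xs) \<longrightarrow> {(x # y # xs) ! i, (x # y # xs) ! Suc i} \<in> E)"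
    then have "{x,y} \<in> E" by (metis length_Cons nth_Cons_0 nth_Cons_Suc zero_less_Suc Suc_less_eq)
    moreover have "\<forall>i. Suc i < length (y # xs) \<longrightarrow> {(y # xs) ! i, (y # xs) ! Suc i} \<in> E"
    proof (intro allI impI)
      fix i assume "Suc i < length (y # xs)"
      then show "{(y # xs) ! i, (y # xs) ! Suc i} \<in> E" using A[THEN conjunct2, rule_format, of "Suc i"] by simp
    qed
    ultimately show "walk E (x # y # xs)" using 3 by simp
  qed
qed auto

lemma wlen_idx: "wlen d w = path_length d w"
proof (induction d w rule: wlen.induct)
  case (3 d x y xs)
  have "path_length d (x # y # xs) = (\<Sum>i<Suc (length xs). d ((x # y # xs) ! i) ((x # y # xs) ! Suc i))"
    by (simp add: path_length_def)
  also have "\<dots> = d x y + (\<Sum>i<length xs. d ((y # xs) ! i) ((y # xs) ! Suc i))"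
    by (subst sum.lessThan_Suc_shift) simp
  also have "\<dots> = d x y + path_length d (y # xs)" by (simp add: path_length_def)
  finally show ?case using 3 by simp
qed (auto simp: path_length_def)

lemma is_path_walk: "is_path E p q w \<longleftrightarrow> walk E w \<and> hd w = p \<and> last w = q"
  unfolding is_path_def walk_idx by auto

lemma walk_append: "walk E (xs @ y # ys) \<longleftrightarrow> walk E (xs @ [y]) \<and> walk E (y # ys)"
proof (induction xs)
  case (Cons a xs)
  then show ?case by (cases xs) auto
qed simp

lemma wlen_append: "wlen d (xs @ y # ys) = wlen d (xs @ [y]) + wlen d (y # ys)"
proof (induction xs)
  case (Cons a xs)
  then show ?case by (cases xs) auto
qed simp

lemma walk_hd_last_append:
  assumes "walk E w1" "walk E w2" "last w1 = hd w2"
  shows "walk E (w1 @ tl w2) \<and> wlen d (w1 @ tl w2) = wlen d w1 + wlen d w2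
     \<and> hd (w1 @ tl w2) = hd w1 \<and> last (w1 @ tl w2) = last w2"
proof -
  obtain y ys where w2: "w2 = y # ys" using assms(2) by (cases w2) auto
  obtain xs where w1: "w1 = xs @ [y]" using assms(1,3) w2
    by (metis append_butlast_last_id list.sel(1) walk.simps(1))
  show ?thesis using assms w1 w2 walk_append[of E xs y ys] wlen_append[of d xs y ys]
    by (cases xs) auto
qed

lemma walk_concat:
  assumes "\<And>i. i < k \<Longrightarrow> \<exists>w. walk E w \<and> hd w = x i \<and> last w = x (Suc i) \<and> wlen d w \<le> c i"
  shows "\<exists>w. walk E w \<and> hd w = x 0 \<and> last w = x k \<and> wlen d w \<le> (\<Sum>i<k. c i)"
  using assms
proof (induction k)
  case 0
  show ?case by (rule exI[of _ "[x 0]"]) simp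
next
  case (Suc k)
  obtain w1 where w1: "walk E w1" "hd w1 = x 0" "last w1 = x k" "wlen d w1 \<le> (\<Sum>i<k. c i)"
    using Suc by auto
  obtain w2 where w2: "walk E w2" "hd w2 = x k" "last w2 = x (Suc k)" "wlen d w2 \<le> c k"
    using Suc.prems[of k] by auto
  from walk_hd_last_append[OF w1(1) w2(1), of d] w1 w2 show ?case
    by (intro exI[of _ "w1 @ tl w2"]) auto
qed

lemma wlen_nonneg: "walk E w \<Longrightarrow> (\<And>x y. {x,y} \<in> E \<Longrightarrow> d x y \<ge> 0) \<Longrightarrow> wlen d w \<ge> 0"
  by (induction E w rule: walk.induct) (auto intro: add_nonneg_nonneg)

lemma walk_shortcut:
  assumes "walk E w" "\<And>x y. {x,y} \<in> E \<Longrightarrow> d x y \<ge> 0"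
  shows "\<exists>w'. walk E w' \<and> distinct w' \<and> hd w' = hd w \<and> last w' = last w \<and> wlen d w' \<le> wlen d w"
  using assms(1)
proof (induction "length w" arbitrary: w rule: less_induct)
  case less
  show ?case
  proof (cases "distinct w")
    case True then show ?thesis using less.prems by blast
  next
    case False
    then obtain xs ys zs y where w: "w = xs @ [y] @ ys @ [y] @ zs"
      using not_distinct_decomp by blast
    have w': "w = xs @ y # ((ys @ [y]) @ zs)" using w by simp
    have wl1: "walk E (xs @ [y])" and wl2: "walk E (y # (ys @ [y]) @ zs)"
      using walk_append[of E xs y "(ys @ [y]) @ zs"] less.prems w' by auto
    have wl3: "walk E (y # ys @ [y])" and wl4: "walk E (y # zs)"
      using walk_append[of E "y # ys" y zs] wl2 by auto
    have len: "wlen d w = wlen d (xs @ [y]) + wlen d (y # ys @ [y]) + wlen d (y # zs)"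
      using wlen_append[of d xs y "(ys @ [y]) @ zs"] wlen_append[of d "y # ys" y zs] w' by simp
    have "wlen d (y # ys @ [y]) \<ge> 0" using wlen_nonneg[OF wl3] assms(2) by blast
    let ?u = "xs @ y # zs"
    have u: "walk E ?u" using walk_append[of E xs y zs] wl1 wl4 by simp
    have ul: "wlen d ?u \<le> wlen d w" using len \<open>wlen d (y # ys @ [y]) \<ge> 0\<close> wlen_append[of d xs y zs] by simp
    have "length ?u < length w" using w by simp
    then obtain w' where "walk E w' \<and> distinct w' \<and> hd w' = hd ?u \<and> last w' = last ?u \<and> wlen d w' \<le> wlen d ?u"
      using less.hyps u by blast
    moreover have "hd ?u = hd w" "last ?u = last w" using w by (cases xs; simp)+
    ultimately show ?thesis using ul by (metis order_trans)
  qed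
qed

lemma walk_set: "walk E w \<Longrightarrow> hd w \<in> S \<Longrightarrow> (\<And>x y. {x,y} \<in> E \<Longrightarrow> x \<in> S \<and> y \<in> S) \<Longrightarrow> set w \<subseteq> S"
  by (induction E w rule: walk.induct) auto

lemma sp_dist_none: "\<not> (\<exists>w. is_path E p q w) \<Longrightarrow> sp_dist d E p q = \<infinity>"
  unfolding sp_dist_def by (simp add: top_ereal_def[symmetric])

lemma sp_dist_attained:
  assumes "finite S" "p \<in> S" "\<And>x y. {x,y} \<in> E \<Longrightarrow> x \<in> S \<and> y \<in> S"
    "\<forall>x\<in>S. \<forall>y\<in>S. d x y \<ge> 0" "\<exists>w. is_path E p q w"
  shows "\<exists>w0. is_path E p q w0 \<and> distinct w0 \<and> sp_dist d E p q = ereal (path_length d w0)"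
proof -
  have nn: "\<And>x y. {x,y} \<in> E \<Longrightarrow> d x y \<ge> 0" using assms(3,4) by blast
  let ?D = "{w. is_path E p q w \<and> distinct w}"
  have "?D \<subseteq> {xs. set xs \<subseteq> S \<and> distinct xs}"
    using walk_set[of E _ S] assms(2,3) by (auto simp: is_path_walk)
  then have fin: "finite ?D" using finite_subset_distinct[OF assms(1)] finite_subset by blast
  obtain w1 where "is_path E p q w1" using assms(5) by blast
  then obtain w2 where "w2 \<in> ?D" using walk_shortcut[of E w1 d] nn by (auto simp: is_path_walk)
  then have ne: "path_length d ` ?D \<noteq> {}" by blast
  obtain w0 where w0: "w0 \<in> ?D" "path_length d w0 = Min (path_length d ` ?D)"
    using Min_in[OF finite_imageI[OF fin] ne] by auto
  have min: "path_length d w0 \<le> path_length d w" if "is_path E p q w" for w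
  proof -
    have "walk E w" using that by (simp add: is_path_walk)
    then obtain w' where "walk E w' \<and> distinct w' \<and> hd w' = hd w \<and> last w' = last w \<and> wlen d w' \<le> wlen d w"
      using walk_shortcut[of E w d, OF _ nn] by blast
    then have "w' \<in> ?D" "path_length d w' \<le> path_length d w" using that by (auto simp: is_path_walk wlen_idx)
    then have "Min (path_length d ` ?D) \<le> path_length d w'"
      using Min_le[OF finite_imageI[OF fin]] by blast
    then show ?thesis using w0(2) \<open>path_length d w' \<le> path_length d w\<close> by linarith
  qed
  have "sp_dist d E p q = ereal (path_length d w0)"
    unfolding sp_dist_def
  proof (rule antisym)
    show "(INF w\<in>{w. is_path E p q w}. ereal (path_length d w)) \<le> ereal (path_length d w0)"
      using w0 by (intro INF_lower2[of w0]) auto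
    show "ereal (path_length d w0) \<le> (INF w\<in>{w. is_path E p q w}. ereal (path_length d w))"
      using min by (intro INF_greatest) auto
  qed
  then show ?thesis using w0 by blast
qed

lemma doubleton_mem_complete: "{x,y} \<in> complete_edges S \<Longrightarrow> x \<in> S \<and> y \<in> S \<and> x \<noteq> y"
  unfolding complete_edges_def by (auto simp: doubleton_eq_iff)

locale fs =
  fixes S :: "'a set" and d :: "'a \<Rightarrow> 'a \<Rightarrow> real" and t :: real
    and E' :: "'a set set" and f :: nat and C :: "'a set \<Rightarrow> 'a set"
  assumes met: "finite_metric_space S d" and t1: "t \<ge> 1" and span: "is_t_spanner S d t E'"
    and f1: "1 \<le> f" and fn: "2 * f + 1 \<le> card S" and vC: "valid_C S d f E' C"
begin

abbreviation "E \<equiv> construction E' C"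

lemma finS: "finite S" using met unfolding finite_metric_space_def by blast
lemma dnn: "x \<in> S \<Longrightarrow> y \<in> S \<Longrightarrow> d x y \<ge> 0" using met unfolding finite_metric_space_def by simp
lemma dsym: "x \<in> S \<Longrightarrow> y \<in> S \<Longrightarrow> d x y = d y x" using met unfolding finite_metric_space_def by simp
lemma dtri: "x \<in> S \<Longrightarrow> y \<in> S \<Longrightarrow> z \<in> S \<Longrightarrow> d x z \<le> d x y + d y z"
  using met unfolding finite_metric_space_def by simp
lemma dself: "x \<in> S \<Longrightarrow> d x x = 0" using met unfolding finite_metric_space_def by simp

lemma E'_complete: "E' \<subseteq> complete_edges S"
proof -
  have "graph_on S E'" using span unfolding is_t_spanner_def by simp
  then show ?thesis unfolding graph_on_def complete_edges_def by simp
qed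

lemma E'_mem: "{a,b} \<in> E' \<Longrightarrow> a \<in> S \<and> b \<in> S \<and> a \<noteq> b"
proof -
  assume "{a,b} \<in> E'"
  then have "{a,b} \<in> complete_edges S" using E'_complete by (rule subsetD[rotated])
  then show ?thesis by (rule doubleton_mem_complete)
qed

lemma C_props:
  assumes "{a,b} \<in> E'"
  shows "C {a,b} \<subseteq> S - {a,b} \<and> card (C {a,b}) = 2*f-1 \<and>
    (\<forall>c\<in>C {a,b}. \<forall>z\<in>S-{a,b}-C {a,b}. d a c + d c b \<le> d a z + d z b)"
proof -
  obtain cs where cs: "distinct cs" "set cs = S - {a, b}"
    "sorted_wrt (\<lambda>x y. d a x + d x b \<le> d a y + d y b) cs"
    "C {a, b} = set (take (2 * f - 1) cs)"
    using vC assms unfolding valid_C_def by blast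
  have ab: "a \<in> S" "b \<in> S" "a \<noteq> b" using E'_mem assms by auto
  have "length cs = card (S - {a,b})" using distinct_card[OF cs(1)] cs(2) by simp
  also have "\<dots> = card S - 2" using ab finS by (simp add: card_Diff_subset)
  finally have len: "length cs \<ge> 2*f-1" using fn by linarith
  have c1: "C {a,b} \<subseteq> S - {a,b}" using cs(2,4) set_take_subset[of "2*f-1" cs] by simp
  have c2: "card (C {a,b}) = 2*f-1" using cs(1,4) len
    by (simp add: distinct_card[OF distinct_take[OF cs(1)]] min_def)
  have c3: "d a c + d c b \<le> d a z + d z b" if "c \<in> C {a,b}" "z \<in> S-{a,b}-C {a,b}" for c z
  proof -
    have "c \<in> set (take (2*f-1) cs)" using that(1) cs(4) by simp
    then obtain i where i: "i < length (take (2*f-1) cs)" "c = take (2*f-1) cs ! i"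
      using in_set_conv_nth[THEN iffD1] by metis
    have "z \<in> set cs" using that(2) cs(2) by blast
    then obtain j where j: "j < length cs" "z = cs ! j" using in_set_conv_nth[THEN iffD1] by metis
    have "\<not> j < 2*f-1"
    proof
      assume "j < 2*f-1"
      then have jl: "j < length (take (2*f-1) cs)" "take (2*f-1) cs ! j = z" using j by auto
      then have "z \<in> set (take (2*f-1) cs)" using nth_mem[OF jl(1)] by simp
      then show False using that(2) cs(4) by blast
    qed
    then have ij: "i < j" "c = cs ! i" using i by auto
    show ?thesis using sorted_wrt_nth_less[OF cs(3) ij(1) j(1)] ij(2) j(2) by simp
  qed
  show ?thesis using c1 c2 c3 by blast
qed

lemma E_complete: "E \<subseteq> complete_edges S"
proof
  fix e assume "e \<in> E"
  then consider "e \<in> E'" | a b c where "{a,b} \<in> E'" "c \<in> C {a,b}" "e = {a,c} \<or> e = {c,b}"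
    unfolding construction_def by blast
  then show "e \<in> complete_edges S"
  proof cases
    case 1 then show ?thesis using E'_complete by blast
  next
    case 2
    then have "c \<in> S - {a,b}" "a \<in> S" "b \<in> S" using C_props E'_mem by blast+
    then show ?thesis using 2(3) unfolding complete_edges_def by blast
  qed
qed

lemma E'_sub_E: "E' \<subseteq> E" unfolding construction_def by blast

lemma finE: "finite E"
proof -
  have "complete_edges S \<subseteq> Pow S" unfolding complete_edges_def by blast
  then show ?thesis using E_complete finS by (meson finite_Pow_iff finite_subset)
qed

lemma survivor:
  assumes ab: "{a,b} \<in> E'" and F: "F \<subseteq> E" "\<forall>v\<in>S. degree F v \<le> f" "{a,b} \<in> F"
    and Z: "Z \<subseteq> S - {a,b}" "2*f-1 \<le> card Z" "\<forall>z\<in>Z. d a z + d z b \<le> R"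
  shows "\<exists>c. {a,c} \<in> E - F \<and> {c,b} \<in> E - F \<and> d a c + d c b \<le> R"
proof -
  let ?C = "C {a,b}"
  have Cp: "?C \<subseteq> S - {a,b}" "card ?C = 2*f-1"
    "\<forall>c\<in>?C. \<forall>z\<in>S-{a,b}-?C. d a c + d c b \<le> d a z + d z b"
    using C_props[OF ab] by blast+
  have abS: "a \<in> S" "b \<in> S" "a \<noteq> b" using E'_mem ab by auto
  have finF: "finite F" using F(1) finE finite_subset by blast
  have finC: "finite ?C" using Cp(1) finS finite_subset by blast
  define Ka where "Ka = {c\<in>?C. {a,c} \<in> F}"
  define Kb where "Kb = {c\<in>?C. {c,b} \<in> F}"
  have "card Ka \<le> card ({e\<in>F. a\<in>e} - {{a,b}})"
  proof (rule card_inj_on_le[of "\<lambda>c. {a,c}"])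
    show "inj_on (\<lambda>c. {a, c}) Ka" using Cp(1) unfolding Ka_def inj_on_def by (auto simp: doubleton_eq_iff)
    show "(\<lambda>c. {a, c}) ` Ka \<subseteq> {e \<in> F. a \<in> e} - {{a, b}}"
      using Cp(1) unfolding Ka_def by (auto simp: doubleton_eq_iff)
    show "finite ({e \<in> F. a \<in> e} - {{a, b}})" using finF by simp
  qed
  also have "\<dots> = degree F a - 1" unfolding degree_def using F(3) finF by (simp add: card_Diff_singleton)
  finally have ka: "card Ka \<le> f - 1" using F(2) abS by (metis diff_le_mono le_trans)
  have "card Kb \<le> card ({e\<in>F. b\<in>e} - {{a,b}})"
  proof (rule card_inj_on_le[of "\<lambda>c. {c,b}"])
    show "inj_on (\<lambda>c. {c,b}) Kb" using Cp(1) unfolding Kb_def inj_on_def by (auto simp: doubleton_eq_iff)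
    show "(\<lambda>c. {c,b}) ` Kb \<subseteq> {e \<in> F. b \<in> e} - {{a, b}}"
      using Cp(1) unfolding Kb_def by (auto simp: doubleton_eq_iff)
    show "finite ({e \<in> F. b \<in> e} - {{a, b}})" using finF by simp
  qed
  also have "\<dots> = degree F b - 1" unfolding degree_def using F(3) finF by (simp add: card_Diff_singleton)
  finally have kb: "card Kb \<le> f - 1" using F(2) abS by (metis diff_le_mono le_trans)
  have "card (Ka \<union> Kb) \<le> 2*f - 2" using ka kb card_Un_le[of Ka Kb] by linarith
  moreover have "finite (Ka \<union> Kb)" using finC unfolding Ka_def Kb_def by simp
  ultimately have "\<not> ?C \<subseteq> Ka \<union> Kb"
    using Cp(2) f1 card_mono[of "Ka \<union> Kb" ?C] by auto
  then obtain c where c: "c \<in> ?C" "c \<notin> Ka" "c \<notin> Kb" by blast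
  have inE: "{a,c} \<in> E" "{c,b} \<in> E" using ab c(1) unfolding construction_def by blast+
  have "d a c + d c b \<le> R"
  proof (cases "Z \<subseteq> ?C")
    case True
    then have "Z = ?C" using card_subset_eq[OF finC True] Z(2) Cp(2) card_mono[OF finC True] by linarith
    then show ?thesis using c(1) Z(3) by blast
  next
    case False
    then obtain z where z: "z \<in> Z" "z \<notin> ?C" by blast
    then have "z \<in> S - {a,b} - ?C" using Z(1) by blast
    then have "d a c + d c b \<le> d a z + d z b" using Cp(3) c(1) by blast
    also have "\<dots> \<le> R" using Z(3) z(1) by blast
    finally show ?thesis .
  qed
  then show ?thesis using c inE unfolding Ka_def Kb_def by blast
qed

lemma edge_walk:
  assumes ab: "{a,b} \<in> E'" and F: "F \<subseteq> E" "\<forall>v\<in>S. degree F v \<le> f" and R: "R \<ge> 0"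
    and Z: "{a,b} \<in> F \<Longrightarrow> \<exists>Z. Z \<subseteq> S - {a,b} \<and> 2*f-1 \<le> card Z \<and> (\<forall>z\<in>Z. d a z + d z b \<le> R)"
  shows "\<exists>w. walk (E-F) w \<and> hd w = a \<and> last w = b \<and> wlen d w \<le> d a b + R"
proof (cases "{a,b} \<in> F")
  case True
  then obtain Z where "Z \<subseteq> S - {a,b}" "2*f-1 \<le> card Z" "\<forall>z\<in>Z. d a z + d z b \<le> R" using Z by blast
  then obtain c where c: "{a,c} \<in> E - F" "{c,b} \<in> E - F" "d a c + d c b \<le> R"
    using survivor[OF ab F True] by blast
  have "d a b \<ge> 0" using E'_mem[OF ab] dnn by blast
  then show ?thesis using c by (intro exI[of _ "[a,c,b]"]) auto
next
  case False
  then show ?thesis using ab E'_sub_E R by (intro exI[of _ "[a,b]"]) auto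
qed

lemma pair:
  assumes F: "F \<subseteq> E" "\<forall>v\<in>S. degree F v \<le> f" and pq: "p \<in> S" "q \<in> S" "p \<noteq> q" "{p,q} \<notin> F"
  shows "\<exists>w. walk (E-F) w \<and> hd w = p \<and> last w = q \<and> wlen d w \<le> (8*real f+2)*t * d p q"
proof -
  have sp: "sp_dist d E' p q \<le> ereal (t * d p q)" using span pq unfolding is_t_spanner_def by blast
  have E'S: "\<And>x y. {x,y} \<in> E' \<Longrightarrow> x \<in> S \<and> y \<in> S" using E'_mem by blast
  have dnn': "\<forall>x\<in>S. \<forall>y\<in>S. d x y \<ge> 0" using dnn by blast
  have ex: "\<exists>w. is_path E' p q w"
  proof (rule ccontr)
    assume "\<not> ?thesis"
    then have "sp_dist d E' p q = \<infinity>" by (rule sp_dist_none)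
    then show False using sp by simp
  qed
  obtain xs where xs: "is_path E' p q xs" "distinct xs" "sp_dist d E' p q = ereal (path_length d xs)"
    using sp_dist_attained[OF finS pq(1) E'S dnn' ex] by blast
  define L where "L = path_length d xs"
  have Lt: "L \<le> t * d p q" using sp xs(3) L_def by simp
  define k where "k = length xs - 1"
  define x where "x i = xs ! i" for i
  define e where "e m = d (x m) (x (Suc m))" for m
  have xsne: "xs \<noteq> []" using xs(1) unfolding is_path_def by blast
  have lenk: "length xs = Suc k" using xsne k_def by simp
  have x0: "x 0 = p" using xs(1) xsne unfolding is_path_def x_def by (simp add: hd_conv_nth)
  have xk: "x k = q" using xs(1) xsne lenk unfolding is_path_def x_def by (simp add: last_conv_nth)
  have k1: "k \<ge> 1" using x0 xk pq(3) by (cases k) auto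
  have edg: "{x i, x (Suc i)} \<in> E'" if "i < k" for i
    using xs(1) that lenk unfolding is_path_def x_def by auto
  have xS: "x i \<in> S" if "i \<le> k" for i
  proof (cases "i < k")
    case True then show ?thesis using E'S[OF edg[OF True]] by blast
  next
    case False then have "i = k" "0 < k" using that k1 by auto
    then show ?thesis using E'S[OF edg[of "k-1"]] by simp
  qed
  have xinj: "i = j" if "i \<le> k" "j \<le> k" "x i = x j" for i j
    using xs(2) that lenk unfolding x_def by (simp add: nth_eq_iff_index_eq)
  have Lsum: "L = (\<Sum>m<k. e m)" unfolding L_def path_length_def e_def x_def using lenk by simp
  have enn: "e m \<ge> 0" if "m < k" for m using xS[of m] xS[of "Suc m"] that dnn unfolding e_def by simp
  have dist: "d (x i) (x j) \<le> (\<Sum>m\<in>{i..<j}. e m)" if "i \<le> j" "j \<le> k" for i j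
    using that
  proof (induction j)
    case 0 then show ?case using xS dself by simp
  next
    case (Suc j)
    show ?case
    proof (cases "i = Suc j")
      case True then show ?thesis using xS Suc.prems dself by simp
    next
      case False
      then have "i \<le> j" using Suc.prems by simp
      then have "d (x i) (x (Suc j)) \<le> d (x i) (x j) + e j"
        unfolding e_def using dtri xS Suc.prems by simp
      also have "\<dots> \<le> (\<Sum>m\<in>{i..<j}. e m) + e j" using Suc.IH \<open>i \<le> j\<close> Suc.prems by simp
      finally show ?thesis using \<open>i \<le> j\<close> by simp
    qed
  qed
  have subsum: "(\<Sum>m\<in>{i'..<j'}. e m) \<le> (\<Sum>m\<in>{i..<j}. e m)" if "i \<le> i'" "j' \<le> j" "j \<le> k" for i i' j j'
    by (rule sum_mono2) (use that enn in auto)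
  have dist2: "d (x i) (x j) \<le> (\<Sum>m\<in>{lo..<hi}. e m)"
    if "lo \<le> i" "lo \<le> j" "i \<le> hi" "j \<le> hi" "hi \<le> k" for i j lo hi
  proof (cases "i \<le> j")
    case True
    then show ?thesis using dist[of i j] subsum[of lo i j hi] that by simp
  next
    case False
    then have "d (x i) (x j) = d (x j) (x i)" using dsym xS that by simp
    then show ?thesis using dist[of j i] subsum[of lo j i hi] that False by simp
  qed
  have Lnn: "L \<ge> 0" unfolding Lsum using enn by (intro sum_nonneg) auto
  have dpq: "d p q \<ge> 0" using dnn pq by simp
  have T1: "d p q \<le> (8*real f+2)*t * d p q"
  proof -
    have "(1::real) * 1 \<le> (8*real f+2)*t" using t1 by (intro mult_mono) auto
    then show ?thesis using dpq mult_right_mono[of 1 "(8*real f+2)*t" "d p q"] by simp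
  qed
  have goal: "\<exists>w. walk (E-F) w \<and> hd w = p \<and> last w = q \<and> wlen d w \<le> (8*real f+2)*t * d p q"
    if exw: "\<exists>w. walk (E-F) w \<and> hd w = p \<and> last w = q \<and> wlen d w \<le> (8*real f+2) * L"
  proof -
    have "(8*real f+2) * L \<le> (8*real f+2) * (t * d p q)" using Lt by (intro mult_left_mono) auto
    obtain w where "walk (E-F) w" "hd w = p" "last w = q" "wlen d w \<le> (8*real f+2) * L" using exw by blast
    moreover have "wlen d w \<le> (8*real f+2)*t * d p q"
      using order_trans[OF \<open>wlen d w \<le> (8*real f+2) * L\<close> \<open>(8*real f+2) * L \<le> (8*real f+2) * (t * d p q)\<close>]
      by (simp add: mult.assoc)
    ultimately show ?thesis by blast
  qed
  show ?thesis
  proof (cases "2*f \<le> k")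
    case True
    define s where "s i = min i (k - 2*f)" for i
    define W where "W i = (\<Sum>m\<in>{s i..<s i + 2*f}. e m)" for i
    have sp1: "s i \<le> i" "Suc i \<le> s i + 2*f" "s i + 2*f \<le> k" "i < s i + 2*f" if "i < k" for i
      using that True f1 unfolding s_def by auto
    have step: "\<exists>w. walk (E-F) w \<and> hd w = x i \<and> last w = x (Suc i) \<and> wlen d w \<le> e i + 2 * W i"
      if "i < k" for i
    proof -
      have Wnn: "2 * W i \<ge> 0" unfolding W_def using enn sp1[OF that] by (simp, intro sum_nonneg) auto
      have "\<exists>Z. Z \<subseteq> S - {x i, x (Suc i)} \<and> 2*f-1 \<le> card Z \<and>
              (\<forall>z\<in>Z. d (x i) z + d z (x (Suc i)) \<le> 2 * W i)"
      proof (intro exI conjI)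
        let ?I = "{s i..s i + 2*f}"
        let ?Z = "x ` ?I - {x i, x (Suc i)}"
        show "?Z \<subseteq> S - {x i, x (Suc i)}" using xS sp1[OF that] by auto
        have inj: "inj_on x ?I" using xinj sp1[OF that] unfolding inj_on_def by auto
        have c1: "card (x ` ?I) = 2*f+1" using card_image[OF inj] by simp
        have sub: "{x i, x (Suc i)} \<subseteq> x ` ?I" using sp1[OF that] by auto
        have "x i \<noteq> x (Suc i)" using xinj[of i "Suc i"] that by auto
        then have c2: "card {x i, x (Suc i)} = 2" by simp
        show "2*f-1 \<le> card ?Z" using card_Diff_subset[OF _ sub] c1 c2 by simp
        show "\<forall>z\<in>?Z. d (x i) z + d z (x (Suc i)) \<le> 2 * W i"
        proof
          fix z assume "z \<in> ?Z"
          then obtain j where j: "j \<in> ?I" "z = x j" by blast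
          have "d (x i) (x j) \<le> W i" unfolding W_def
            using dist2[of "s i" i j "s i + 2*f"] j sp1[OF that] by auto
          moreover have "d (x j) (x (Suc i)) \<le> W i" unfolding W_def
            using dist2[of "s i" j "Suc i" "s i + 2*f"] j sp1[OF that] by auto
          ultimately show "d (x i) z + d z (x (Suc i)) \<le> 2 * W i" using j by simp
        qed
      qed
      then have ew: "\<exists>w. walk (E-F) w \<and> hd w = x i \<and> last w = x (Suc i) \<and> wlen d w \<le> d (x i) (x (Suc i)) + 2*W i"
        by (intro edge_walk[OF edg[OF that] F Wnn]) blast
      then show ?thesis unfolding e_def by simp
    qed
    obtain w where w: "walk (E-F) w" "hd w = x 0" "last w = x k" "wlen d w \<le> (\<Sum>i<k. e i + 2 * W i)"
      using walk_concat[of k "E-F" x d "\<lambda>i. e i + 2 * W i"] step by blast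
    have cardb: "real (card {i\<in>{..<k}. s i \<le> m \<and> m < s i + 2*f}) \<le> 4 * real f - 1" for m
    proof -
      have "{i\<in>{..<k}. s i \<le> m \<and> m < s i + 2*f} \<subseteq> {m+1-2*f..<m+2*f}"
      proof
        fix i assume "i \<in> {i\<in>{..<k}. s i \<le> m \<and> m < s i + 2*f}"
        then have "i < k" "s i \<le> m" "m < s i + 2*f" by auto
        moreover have "s i \<le> i" "i < s i + 2*f" using sp1[OF \<open>i < k\<close>] by auto
        ultimately show "i \<in> {m+1-2*f..<m+2*f}" by simp
      qed
      then have "card {i\<in>{..<k}. s i \<le> m \<and> m < s i + 2*f} \<le> card {m+1-2*f..<m+2*f}"
        by (intro card_mono) auto
      also have "\<dots> \<le> 4*f-1" using f1 by simp
      finally show ?thesis using f1 by (simp add: of_nat_diff)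
    qed
    have "(\<Sum>i<k. W i) = (\<Sum>i<k. \<Sum>m<k. if s i \<le> m \<and> m < s i + 2*f then e m else 0)"
    proof (rule sum.cong[OF refl])
      fix i assume "i \<in> {..<k}"
      then have "{m \<in> {..<k}. s i \<le> m \<and> m < s i + 2*f} = {s i..<s i+2*f}" using sp1[of i] by auto
      moreover have "(\<Sum>m<k. if s i \<le> m \<and> m < s i + 2*f then e m else 0)
          = sum e {m \<in> {..<k}. s i \<le> m \<and> m < s i + 2*f}" by (rule sum.inter_filter[symmetric]) simp
      ultimately show "W i = (\<Sum>m<k. if s i \<le> m \<and> m < s i + 2*f then e m else 0)"
        unfolding W_def by simp
    qed
    also have "\<dots> = (\<Sum>m<k. \<Sum>i<k. if s i \<le> m \<and> m < s i + 2*f then e m else 0)" by (rule sum.swap)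
    also have "\<dots> = (\<Sum>m<k. real (card {i\<in>{..<k}. s i \<le> m \<and> m < s i + 2*f}) * e m)"
    proof (rule sum.cong[OF refl])
      fix m
      have "(\<Sum>i<k. if s i \<le> m \<and> m < s i + 2*f then e m else 0)
          = (\<Sum>i\<in>{i\<in>{..<k}. s i \<le> m \<and> m < s i + 2*f}. e m)"
        by (rule sum.inter_filter[symmetric]) simp
      then show "(\<Sum>i<k. if s i \<le> m \<and> m < s i + 2*f then e m else 0)
          = real (card {i\<in>{..<k}. s i \<le> m \<and> m < s i + 2*f}) * e m" by simp
    qed
    also have "\<dots> \<le> (\<Sum>m<k. (4 * real f - 1) * e m)"
      using cardb enn by (intro sum_mono mult_right_mono) auto
    also have "\<dots> = (4 * real f - 1) * L" unfolding Lsum by (simp add: sum_distrib_left)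
    finally have Wsum: "(\<Sum>i<k. W i) \<le> (4 * real f - 1) * L" .
    have "wlen d w \<le> L + 2 * (\<Sum>i<k. W i)" using w(4) unfolding Lsum by (simp add: sum.distrib sum_distrib_left)
    also have "\<dots> \<le> (8*real f+2) * L" using Wsum Lnn by (simp add: algebra_simps)
    finally show ?thesis using goal w x0 xk by blast
  next
    case False
    have dL: "d (x i) (x j) \<le> L" if "i \<le> k" "j \<le> k" for i j
      using dist2[of 0 i j k] that unfolding Lsum by (simp add: atLeast0LessThan)
    have L0: "L = e 0 + (\<Sum>m\<in>{1..<k}. e m)" unfolding Lsum using k1
      by (simp add: atLeast0LessThan[symmetric] sum.atLeast_Suc_lessThan)
    have dL1: "d (x i) (x 1) \<le> L - e 0" if "1 \<le> i" "i \<le> k" for i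
      using dist2[of 1 i 1 k] that L0 by simp
    show ?thesis
    proof (cases "k = 1")
      case True
      then have "{p,q} \<in> E - F" using edg[of 0] x0 xk E'_sub_E pq(4) by auto
      then have "walk (E-F) [p,q]" by simp
      moreover have "d p q \<le> (8*real f+2)*t * d p q"
using T1 .
      ultimately show ?thesis by (intro exI[of _ "[p,q]"]) auto
    next
      case False
      then have k2: "k \<ge> 2" using k1 by simp
      define y where "y = x 1"
      have py: "{p,y} \<in> E'" using edg[of 0] k1 x0 y_def by simp
      have yS: "y \<in> S" using xS k1 y_def by simp
      have pny: "p \<noteq> y" using xinj[of 0 1] x0 y_def k1 by auto
      have qny: "q \<noteq> y" using xinj[of 1 k] xk y_def k2 by auto
      show ?thesis
      proof (cases "q \<in> C {p,y}")
        case True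
        then have "{p,q} \<in> E" using py unfolding construction_def by blast
        then have "walk (E-F) [p,q]" using pq(4) by simp
        moreover have "d p q \<le> (8*real f+2)*t * d p q"
using T1 .
        ultimately show ?thesis by (intro exI[of _ "[p,q]"]) auto
      next
        case False
        have Cp: "C {p,y} \<subseteq> S - {p,y}" "card (C {p,y}) = 2*f-1"
          "\<forall>c\<in>C {p,y}. \<forall>z\<in>S-{p,y}-C {p,y}. d p c + d c y \<le> d p z + d z y"
          using C_props[OF py] by blast+
        have cq: "d p c + d c y \<le> d p q + d q y" if "c \<in> C {p,y}" for c
          using Cp(3) that False pq qny by blast
        have dpqL: "d p q \<le> L" using dL[of 0 k] x0 xk by simp
        have dqyL: "d q y \<le> L - e 0" using dL1[of k] xk y_def k1 dsym[OF pq(2) yS] by simp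
        have e0: "e 0 \<ge> 0" using enn k1 by simp
        have step: "\<exists>w. walk (E-F) w \<and> hd w = x i \<and> last w = x (Suc i) \<and> wlen d w \<le> e i + 4 * L"
          if "i < k" for i
        proof -
          have L4: "4 * L \<ge> 0" using Lnn by simp
          have "\<exists>Z. Z \<subseteq> S - {x i, x (Suc i)} \<and> 2*f-1 \<le> card Z \<and>
                (\<forall>z\<in>Z. d (x i) z + d z (x (Suc i)) \<le> 4 * L)"
          proof (cases "i = 0")
            case True
            show ?thesis
            proof (intro exI conjI)
              show "C {p,y} \<subseteq> S - {x i, x (Suc i)}" using Cp(1) True x0 y_def by simp
              show "2*f-1 \<le> card (C {p,y})" using Cp(2) by simp
              show "\<forall>z\<in>C {p,y}. d (x i) z + d z (x (Suc i)) \<le> 4 * L"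
              proof
                fix z assume "z \<in> C {p,y}"
                then show "d (x i) z + d z (x (Suc i)) \<le> 4 * L"
                  using cq[of z] True x0 y_def dpqL dqyL e0 Lnn by simp
              qed
            qed
          next
            case False
            let ?a = "x i" and ?b = "x (Suc i)"
            have aS: "?a \<in> S" and bS: "?b \<in> S" using xS that by auto
            have dap: "d ?a p \<le> L" using dL[of i 0] x0 that by simp
            have dpb: "d p ?b \<le> L" using dL[of 0 "Suc i"] x0 that by simp
            have day: "d ?a y \<le> L - e 0" using dL1[of i] False that y_def by simp
            have dyb: "d y ?b \<le> L - e 0" using dL1[of "Suc i"] that y_def dsym[OF yS bS] by simp
            let ?Z = "(C {p,y} \<union> {p,y}) - {?a, ?b}"
            show ?thesis
            proof (intro exI conjI)
              show "?Z \<subseteq> S - {?a, ?b}" using Cp(1) pq(1) yS by auto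
              have finC: "finite (C {p,y})" using Cp(1) finS finite_subset by blast
              have "card (C {p,y} \<union> {p,y}) = 2*f-1 + 2" using Cp pny finC
                by (subst card_Un_disjoint) auto
              moreover have "card {?a, ?b} \<le> 2" by (simp add: card_insert_le_m1)
              ultimately show "2*f-1 \<le> card ?Z" using diff_card_le_card_Diff[of "{?a,?b}" "C {p,y} \<union> {p,y}"]
                by simp
              show "\<forall>z\<in>?Z. d ?a z + d z ?b \<le> 4 * L"
              proof
                fix z assume z: "z \<in> ?Z"
                then consider "z \<in> C {p,y}" | "z = p" | "z = y" by blast
                then show "d ?a z + d z ?b \<le> 4 * L"
                proof cases
                  case 1
                  then have cS: "z \<in> S" using Cp(1) by blast
                  have t1': "d ?a z \<le> d ?a p + d p z" using dtri aS pq(1) cS by blast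
                  have t2: "d ?a z \<le> d ?a y + d y z" using dtri aS yS cS by blast
                  have t3: "d z ?b \<le> d z p + d p ?b" using dtri bS pq(1) cS by blast
                  have t4: "d z ?b \<le> d z y + d y ?b" using dtri bS yS cS by blast
                  have s1: "d z p = d p z" using dsym pq(1) cS by blast
                  have s2: "d y z = d z y" using dsym yS cS by blast
                  show ?thesis using cq[OF 1] t1' t2 t3 t4 s1 s2 dap dpb day dyb dpqL dqyL e0 by linarith
                next
                  case 2 then show ?thesis using dap dpb dsym[OF aS pq(1)] Lnn by simp
                next
                  case 3 then show ?thesis using day dyb e0 Lnn by simp
                qed
              qed
            qed
          qed
          then have ew: "\<exists>w. walk (E-F) w \<and> hd w = x i \<and> last w = x (Suc i) \<and> wlen d w \<le> d (x i) (x (Suc i)) + 4*L"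
        by (intro edge_walk[OF edg[OF that] F L4]) blast
      then show ?thesis unfolding e_def by simp
        qed
        obtain w where w: "walk (E-F) w" "hd w = x 0" "last w = x k" "wlen d w \<le> (\<Sum>i<k. e i + 4 * L)"
          using walk_concat[of k "E-F" x d "\<lambda>i. e i + 4 * L"] step by blast
        have "wlen d w \<le> L + real k * 4 * L" using w(4) unfolding Lsum by (simp add: sum.distrib)
        also have "\<dots> \<le> L + (2 * real f) * 4 * L"
          using \<open>\<not> 2 * f \<le> k\<close> Lnn by (intro add_left_mono mult_right_mono) auto
        also have "\<dots> \<le> (8*real f+2) * L" using Lnn by (simp add: algebra_simps)
        finally show ?thesis using goal w x0 xk by blast
      qed
    qed
  qed
qed


lemma spanner_part: "fault_degree_spanner S d f ((8 * real f + 2) * t) E"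
  unfolding fault_degree_spanner_def
proof (intro conjI allI impI ballI)
  show "graph_on S E" using E_complete unfolding graph_on_def complete_edges_def by simp
next
  fix F p q assume F: "F \<subseteq> E \<and> (\<forall>v\<in>S. degree F v \<le> f)" and pq: "p \<in> S" "q \<in> S"
  let ?T = "(8 * real f + 2) * t"
  have Tpos: "?T > 0" using t1 by (intro mult_pos_pos) auto
  let ?K = "complete_edges S - F"
  show "sp_dist d (E - F) p q \<le> ereal ?T * sp_dist d ?K p q"
  proof (cases "\<exists>w. is_path ?K p q w")
    case False
    then have "sp_dist d ?K p q = \<infinity>" by (rule sp_dist_none)
    moreover have "t \<noteq> 0" using t1 by simp
    ultimately show ?thesis using Tpos by simp
  next
    case True
    have KS: "\<And>x y. {x,y} \<in> ?K \<Longrightarrow> x \<in> S \<and> y \<in> S"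
    proof -
      fix x y assume "{x,y} \<in> ?K"
      then have "{x,y} \<in> complete_edges S" by simp
      then show "x \<in> S \<and> y \<in> S" using doubleton_mem_complete[of x y S] by simp
    qed
    have dnn': "\<forall>x\<in>S. \<forall>y\<in>S. d x y \<ge> 0" using dnn by blast
    obtain w0 where w0: "is_path ?K p q w0" "sp_dist d ?K p q = ereal (path_length d w0)"
      using sp_dist_attained[OF finS pq(1) KS dnn' True] by blast
    define k where "k = length w0 - 1"
    define x where "x i = w0 ! i" for i
    have w0ne: "w0 \<noteq> []" using w0(1) unfolding is_path_def by blast
    have lenk: "length w0 = Suc k" using w0ne k_def by simp
    have x0: "x 0 = p" using w0(1) w0ne unfolding is_path_def x_def by (simp add: hd_conv_nth)
    have xk: "x k = q" using w0(1) w0ne lenk unfolding is_path_def x_def by (simp add: last_conv_nth)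
    have step: "\<exists>w. walk (E-F) w \<and> hd w = x i \<and> last w = x (Suc i) \<and> wlen d w \<le> ?T * d (x i) (x (Suc i))"
      if "i < k" for i
    proof -
      have "{x i, x (Suc i)} \<in> ?K" using w0(1) that lenk unfolding is_path_def x_def by auto
      then have "{x i, x (Suc i)} \<in> complete_edges S" "{x i, x (Suc i)} \<notin> F" by simp_all
      then have "x i \<in> S" "x (Suc i) \<in> S" "x i \<noteq> x (Suc i)" "{x i, x (Suc i)} \<notin> F"
        using doubleton_mem_complete[of "x i" "x (Suc i)" S] by simp_all
      then show ?thesis using pair[of F "x i" "x (Suc i)"] F by presburger
    qed
    obtain w where w: "walk (E-F) w" "hd w = x 0" "last w = x k"
      "wlen d w \<le> (\<Sum>i<k. ?T * d (x i) (x (Suc i)))"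
      using walk_concat[of k "E-F" x d "\<lambda>i. ?T * d (x i) (x (Suc i))"] step by blast
    have "(\<Sum>i<k. ?T * d (x i) (x (Suc i))) = ?T * path_length d w0"
      unfolding path_length_def x_def k_def by (simp add: sum_distrib_left)
    then have wl: "path_length d w \<le> ?T * path_length d w0" using w(4) wlen_idx[of d w] by simp
    have "is_path (E-F) p q w" using w x0 xk by (simp add: is_path_walk)
    then have "w \<in> {w. is_path (E-F) p q w}" by simp
    then have "sp_dist d (E - F) p q \<le> ereal (path_length d w)"
      unfolding sp_dist_def by (rule INF_lower)
    also have "\<dots> \<le> ereal (?T * path_length d w0)" using wl by simp
    also have "\<dots> = ereal ?T * sp_dist d ?K p q" using w0(2) by simp
    finally show ?thesis .
  qed
qed

lemma card_part: "card E \<le> (4 * f - 1) * card E'"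
proof -
  define ab where "ab e = (SOME p. e = {fst p, snd p})" for e :: "'a set"
  have abp: "e = {fst (ab e), snd (ab e)}" if eE: "e \<in> E'" for e
  proof -
    obtain a b where "e = {a,b}" using eE E'_complete unfolding complete_edges_def by blast
    then have "\<exists>p. e = {fst p, snd p}" by (intro exI[of _ "(a,b)"]) simp
    then show ?thesis unfolding ab_def by (rule someI_ex)
  qed
  define G where "G e = insert e ((\<lambda>c. {fst (ab e), c}) ` C e \<union> (\<lambda>c. {c, snd (ab e)}) ` C e)" for e
  have Cc: "finite (C e) \<and> card (C e) = 2*f-1" if "e \<in> E'" for e
  proof -
    have "{fst (ab e), snd (ab e)} \<in> E'" using abp that by simp
    from C_props[OF this] have "C e \<subseteq> S" "card (C e) = 2*f-1" using abp[OF that] by auto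
    then show ?thesis using finS finite_subset by blast
  qed
  have sub: "E \<subseteq> (\<Union>e\<in>E'. G e)"
  proof
    fix e' assume "e' \<in> E"
    then consider "e' \<in> E'" | a b c where "{a,b} \<in> E'" "c \<in> C {a,b}" "e' = {a,c} \<or> e' = {c,b}"
      unfolding construction_def by blast
    then show "e' \<in> (\<Union>e\<in>E'. G e)"
    proof cases
      case 1 then show ?thesis unfolding G_def by blast
    next
      case 2
      let ?e = "{a,b}"
      have "?e = {fst (ab ?e), snd (ab ?e)}" using abp 2(1) by blast
      then have "(fst (ab ?e) = a \<and> snd (ab ?e) = b) \<or> (fst (ab ?e) = b \<and> snd (ab ?e) = a)"
        by (auto simp: doubleton_eq_iff)
      then have key: "e' = {fst (ab ?e), c} \<or> e' = {c, snd (ab ?e)}" using 2(3)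
        by (elim disjE conjE) (simp_all add: insert_commute)
      then have "e' \<in> G ?e" using 2(2) unfolding G_def by blast
      then show ?thesis using 2(1) by blast
    qed
  qed
  have finE': "finite E'" using E'_sub_E finE finite_subset by blast
  have cG: "card (G e) \<le> 4*f-1" if "e \<in> E'" for e
  proof -
    have "card (G e) \<le> Suc (card ((\<lambda>c. {fst (ab e), c}) ` C e \<union> (\<lambda>c. {c, snd (ab e)}) ` C e))"
      unfolding G_def using Cc[OF that] by (simp add: card_insert_if)
    also have "\<dots> \<le> Suc (card ((\<lambda>c. {fst (ab e), c}) ` C e) + card ((\<lambda>c. {c, snd (ab e)}) ` C e))"
      by (simp only: Suc_le_mono) (rule card_Un_le)
    also have "\<dots> \<le> Suc (card (C e) + card (C e))"
    proof -
      have "card ((\<lambda>c. {fst (ab e), c}) ` C e) \<le> card (C e)" using Cc[OF that] card_image_le by blast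
      moreover have "card ((\<lambda>c. {c, snd (ab e)}) ` C e) \<le> card (C e)" using Cc[OF that] card_image_le by blast
      ultimately show ?thesis by linarith
    qed
    also have "\<dots> = 4*f-1" using Cc[OF that] f1 by simp
    finally show ?thesis .
  qed
  have finG: "finite (\<Union>e\<in>E'. G e)" using finE' Cc unfolding G_def by auto
  have "card E \<le> card (\<Union>e\<in>E'. G e)" by (rule card_mono[OF finG sub])
  also have "\<dots> \<le> (\<Sum>e\<in>E'. card (G e))" by (rule card_UN_le[OF finE'])
  also have "\<dots> \<le> (\<Sum>e\<in>E'. 4*f-1)" by (rule sum_mono) (rule cG)
  also have "\<dots> = (4*f-1) * card E'" by simp
  finally show ?thesis .
qed

end

theorem theorem2:
  fixes S :: "'a set" and d :: "'a \<Rightarrow> 'a \<Rightarrow> real" and t :: real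
    and E' :: "'a set set" and f :: nat and C :: "'a set \<Rightarrow> 'a set"
  assumes "finite_metric_space S d"
    and "t \<ge> 1"
    and "is_t_spanner S d t E'"
    and "1 \<le> f" and "real f \<le> (real (card S) - 1) / 2"
    and "valid_C S d f E' C"
  shows "fault_degree_spanner S d f ((8 * real f + 2) * t) (construction E' C)
       \<and> card (construction E' C) \<le> (4 * f - 1) * card E'"
proof -
  have "real (2 * f + 1) \<le> real (card S)" using assms(5) by (simp add: field_simps)
  then have "2 * f + 1 \<le> card S" by (simp only: of_nat_le_iff)
  then interpret fs S d t E' f C using assms by (unfold_locales) auto
  show ?thesis using spanner_part card_part by blast
qed

end
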